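(* Let $X\in\mathfrak U$ and let $Y$ be a nonempty subspace of $X$. Then $Y\in\mathfrak U$.
   Context: For a metric space $(X,d)$, $\operatorname{Sp}(X)=\{d(x,y): x,y\in X,\ x\neq y\}$. $\mathfrak U$ denotes the class of finite ultrametric spaces $X$ with $|\operatorname{Sp}(X)|=|X|-1$. A subspace carries the restricted metric. *)

theory Defs
  imports Complex_Main
begin

definition metric_on :: "'a set \<Rightarrow> ('a \<Rightarrow> 'a \<Rightarrow> real) \<Rightarrow> bool" where
  "metric_on X d \<longleftrightarrow>
     (\<forall>x\<in>X. \<forall>y\<in>X. d x y \<ge> 0 \<and> (d x y = 0 \<longleftrightarrow> x = y) \<and> d x y = d y x) \<and>
     (\<forall>x\<in>X. \<forall>y\<in>X. \<forall>z\<in>X. d x z \<le> d x y + d y z)"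

definition ultrametric_on :: "'a set \<Rightarrow> ('a \<Rightarrow> 'a \<Rightarrow> real) \<Rightarrow> bool" where
  "ultrametric_on X d \<longleftrightarrow> metric_on X d \<and>
     (\<forall>x\<in>X. \<forall>y\<in>X. \<forall>z\<in>X. d x z \<le> max (d x y) (d y z))"

definition Sp :: "'a set \<Rightarrow> ('a \<Rightarrow> 'a \<Rightarrow> real) \<Rightarrow> real set" where
  "Sp X d = {d x y | x y. x \<in> X \<and> y \<in> X \<and> x \<noteq> y}"

definition classU :: "'a set \<Rightarrow> ('a \<Rightarrow> 'a \<Rightarrow> real) \<Rightarrow> bool" where
  "classU X d \<longleftrightarrow> finite X \<and> ultrametric_on X d \<and> int (card (Sp X d)) = int (card X) - 1"

end

theory Submission
  imports Defs
begin

lemma Sp_finite: "finite A \<Longrightarrow> finite (Sp A d)"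
proof -
  assume "finite A"
  have "Sp A d \<subseteq> (\<lambda>(x,y). d x y) ` (A \<times> A)" unfolding Sp_def by auto
  thus ?thesis using \<open>finite A\<close> by (meson finite_SigmaI finite_imageI finite_subset)
qed

lemma Sp_mono: "A \<subseteq> B \<Longrightarrow> Sp A d \<subseteq> Sp B d"
  unfolding Sp_def by blast

lemma one_point:
  assumes U: "ultrametric_on X d" and A: "A \<subseteq> X" "A \<noteq> {}" "finite A" and z: "z \<in> X"
  shows "\<exists>r. Sp (insert z A) d \<subseteq> Sp A d \<union> {r}"
proof -
  have "Min (d z ` A) \<in> d z ` A" using A by (intro Min_in) auto
  then obtain y0 where y0: "y0 \<in> A" "d z y0 = Min (d z ` A)" by auto
  have min: "\<forall>y\<in>A. d z y0 \<le> d z y" using y0 A by auto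
  have sym: "\<forall>x\<in>X. \<forall>y\<in>X. d x y = d y x" using U unfolding ultrametric_on_def metric_on_def by blast
  have ult: "\<forall>x\<in>X. \<forall>y\<in>X. \<forall>w\<in>X. d x w \<le> max (d x y) (d y w)" using U unfolding ultrametric_on_def by blast
  have key: "d z y \<in> Sp A d \<union> {d z y0}" if y: "y \<in> A" for y
  proof (cases "d z y > d z y0")
    case True
    have yX: "y \<in> X" "y0 \<in> X" using y y0 A by auto
    have "d y0 y \<le> max (d y0 z) (d z y)" using ult yX z by blast
    moreover have "d y0 z = d z y0" using sym yX z by blast
    ultimately have 1: "d y0 y \<le> d z y" using True by auto
    have "d z y \<le> max (d z y0) (d y0 y)" using ult yX z by blast
    hence "d z y \<le> d y0 y" using True by auto
    hence "d z y = d y0 y" using 1 by auto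
    moreover have "y0 \<noteq> y" using True by auto
    ultimately show ?thesis using y y0 unfolding Sp_def by blast
  next
    case False
    thus ?thesis using min y by force
  qed
  have "Sp (insert z A) d \<subseteq> Sp A d \<union> {d z y0}"
  proof
    fix t assume "t \<in> Sp (insert z A) d"
    then obtain x y where t: "t = d x y" "x \<in> insert z A" "y \<in> insert z A" "x \<noteq> y"
      unfolding Sp_def by blast
    show "t \<in> Sp A d \<union> {d z y0}"
    proof (cases "x = z")
      case True thus ?thesis using t key by auto
    next
      case xz: False
      show ?thesis
      proof (cases "y = z")
        case True
        have "x \<in> A" using t xz by auto
        hence "d x y = d z x" using sym True A z by blast
        thus ?thesis using key \<open>x \<in> A\<close> t by auto
      next
        case False
        thus ?thesis using t xz unfolding Sp_def by blast
      qed
    qed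
  qed
  thus ?thesis by blast
qed

lemma grow:
  assumes U: "ultrametric_on X d" and Y: "Y \<subseteq> X" "Y \<noteq> {}" "finite Y"
    and F: "finite F" "F \<subseteq> X"
  shows "card (Sp (Y \<union> F) d) \<le> card (Sp Y d) + card F"
  using F
proof (induction F rule: finite_induct)
  case empty thus ?case by simp
next
  case (insert z F)
  have IH: "card (Sp (Y \<union> F) d) \<le> card (Sp Y d) + card F" using insert by auto
  obtain r where r: "Sp (insert z (Y \<union> F)) d \<subseteq> Sp (Y \<union> F) d \<union> {r}"
    using one_point[OF U, of "Y \<union> F" z] insert Y by auto
  have fin: "finite (Sp (Y \<union> F) d)" using insert Y by (intro Sp_finite) auto
  have "card (Sp (Y \<union> insert z F) d) \<le> card (Sp (Y \<union> F) d \<union> {r})"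
    using r fin by (intro card_mono) auto
  also have "\<dots> \<le> card (Sp (Y \<union> F) d) + 1" using card_Un_le[of "Sp (Y \<union> F) d" "{r}"] by simp
  finally show ?case using IH insert by simp
qed

theorem corollary9:
  fixes X Y :: "'a set" and d :: "'a \<Rightarrow> 'a \<Rightarrow> real"
  assumes "classU X d" and "Y \<subseteq> X" and "Y \<noteq> {}"
  shows "classU Y d"
proof -
  have fX: "finite X" and U: "ultrametric_on X d" and c: "int (card (Sp X d)) = int (card X) - 1"
    using assms(1) unfolding classU_def by auto
  have fY: "finite Y" using fX assms(2) finite_subset by blast
  have UY: "ultrametric_on Y d" using U assms(2) unfolding ultrametric_on_def metric_on_def by blast
  have "Y \<union> (X - Y) = X" using assms(2) by blast
  hence 1: "card (Sp X d) \<le> card (Sp Y d) + card (X - Y)"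
    using grow[OF U assms(2,3) fY, of "X - Y"] fX by auto
  have 2: "card (X - Y) = card X - card Y" using fY assms(2) card_Diff_subset by blast
  have 3: "card Y \<le> card X" using fX assms(2) card_mono by blast
  obtain y where y: "y \<in> Y" using assms(3) by blast
  have "{y} \<union> (Y - {y}) = Y" using y by blast
  moreover have "Sp {y} d = {}" unfolding Sp_def by auto
  ultimately have 4: "card (Sp Y d) \<le> card (Y - {y})"
    using grow[OF UY, of "{y}" "Y - {y}"] fY y by auto
  have 5: "card (Y - {y}) = card Y - 1" using y fY by simp
  have "card Y \<ge> 1" using y fY card_0_eq by fastforce
  hence "int (card (Sp Y d)) = int (card Y) - 1" using 1 2 3 4 5 c by linarith
  thus ?thesis using fY UY unfolding classU_def by auto
qed

end
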